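(* Let $\Gamma$ be a connected signed graph. Then all roots of the polynomial $t\mapsto\mathcal{M}(\Gamma(t))$ are real and non-negative.
   Context: A signed graph $\Gamma$ is a finite simple undirected graph with vertex set $\{1,\dots,N\}$ in which every edge $\{i,j\}$ carries a nonzero real weight $\gamma_{ij}$, which may be of either sign. For real $t$, $\Gamma(t)$ is the weighted graph with the same edges as $\Gamma$ and weights $\gamma_{ij}(t)=\gamma_{ij}$ if $\gamma_{ij}>0$ and $\gamma_{ij}(t)=t\gamma_{ij}$ if $\gamma_{ij}<0$. For a weighted graph $H$, $\mathcal{M}(H)=\sum_{T}\prod_{e\in E(T)}w_H(e)$, the sum over all spanning trees $T$ of $H$ of the product of the edge weights $w_H(e)$; thus $\mathcal{M}(\Gamma(t))$ is a polynomial in $t$. Equivalently $\mathcal{M}(H)=\frac{(-1)^{n-1}}{n}\prod_{i=2}^n\lambda_i$, where $n=|V(H)|$ and $\lambda_1=0,\lambda_2,\dots,\lambda_n$ are the eigenvalues of the Laplacian of $H$ (off-diagonal entries the weights, diagonal entries minus the row sums of the weights). *)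

theory Defs
  imports Complex_Main "HOL-Computational_Algebra.Polynomial"
begin

definition signed_graph :: "nat \<Rightarrow> nat set set \<Rightarrow> (nat set \<Rightarrow> real) \<Rightarrow> bool" where
  "signed_graph N E \<gamma> \<longleftrightarrow>
     (\<forall>e\<in>E. \<exists>i j. e = {i, j} \<and> i \<noteq> j \<and> i \<in> {1..N} \<and> j \<in> {1..N}) \<and>
     (\<forall>e\<in>E. \<gamma> e \<noteq> 0)"

definition edge_rel :: "nat set set \<Rightarrow> (nat \<times> nat) set" where
  "edge_rel T = {(i, j). {i, j} \<in> T}"

definition connected_on :: "nat \<Rightarrow> nat set set \<Rightarrow> bool" where
  "connected_on N T \<longleftrightarrow> (\<forall>i\<in>{1..N}. \<forall>j\<in>{1..N}. (i, j) \<in> (edge_rel T)\<^sup>*)"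

definition spanning_trees :: "nat \<Rightarrow> nat set set \<Rightarrow> nat set set set" where
  "spanning_trees N E = {T. T \<subseteq> E \<and> connected_on N T \<and> card T = N - 1}"

definition M :: "nat \<Rightarrow> nat set set \<Rightarrow> (nat set \<Rightarrow> 'a::comm_ring_1) \<Rightarrow> 'a" where
  "M N E w = (\<Sum>T\<in>spanning_trees N E. \<Prod>e\<in>T. w e)"

definition Gamma_t_weight :: "(nat set \<Rightarrow> real) \<Rightarrow> nat set \<Rightarrow> real poly" where
  "Gamma_t_weight \<gamma> e = (if \<gamma> e > 0 then [:\<gamma> e:] else [:0, \<gamma> e:])"

definition M_Gamma_poly :: "nat \<Rightarrow> nat set set \<Rightarrow> (nat set \<Rightarrow> real) \<Rightarrow> real poly" where
  "M_Gamma_poly N E \<gamma> = M N E (Gamma_t_weight \<gamma>)"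

end

theory Submission
  imports Defs "Jordan_Normal_Form.Char_Poly"
begin


definition colsel :: "'a mat \<Rightarrow> nat \<Rightarrow> (nat \<Rightarrow> nat) \<Rightarrow> 'a mat" where
  "colsel A n g = mat n n (\<lambda>(i,j). A $$ (i, g j))"
definition rowsel :: "'a mat \<Rightarrow> nat \<Rightarrow> (nat \<Rightarrow> nat) \<Rightarrow> 'a mat" where
  "rowsel C n g = mat n n (\<lambda>(i,j). C $$ (g i, j))"
definition en :: "nat set \<Rightarrow> nat \<Rightarrow> nat" where
  "en K = (SOME g. bij_betw g {0..<card K} K)"

lemma en_bij: "finite K \<Longrightarrow> bij_betw (en K) {0..<card K} K"
  unfolding en_def by (metis ex_bij_betw_nat_finite someI_ex)

lemma cb_perm_part:
  fixes A C :: "'a::comm_ring_1 mat"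
  assumes A: "A \<in> carrier_mat n m" and C: "C \<in> carrier_mat m n"
    and g: "bij_betw g {0..<n} K" and K: "K \<subseteq> {0..<m}"
  shows "(\<Sum>f\<in>{f. (\<forall>i\<in>{0..<n}. f i \<in> {0..<m}) \<and> (\<forall>i. i \<notin> {0..<n} \<longrightarrow> f i = i)
              \<and> inj_on f {0..<n} \<and> f ` {0..<n} = K}.
           (\<Prod>i\<in>{0..<n}. A $$ (i, f i)) * det (rowsel C n f))
         = det (colsel A n g) * det (rowsel C n g)"
proof -
  let ?U = "{0..<n}"
  let ?S = "{f. (\<forall>i\<in>{0..<n}. f i \<in> {0..<m}) \<and> (\<forall>i. i \<notin> {0..<n} \<longrightarrow> f i = i)
              \<and> inj_on f {0..<n} \<and> f ` {0..<n} = K}"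
  let ?P = "{p. p permutes ?U}"
  let ?j = "\<lambda>p i. if i < n then g (p i) else i"
  let ?i = "\<lambda>f i. if i < n then inv_into ?U g (f i) else i"
  let ?Q = "\<lambda>f. (\<Prod>i\<in>{0..<n}. A $$ (i, f i)) * det (rowsel C n f)"
  have gK: "\<And>i. i < n \<Longrightarrow> g i \<in> K" using g by (auto simp: bij_betw_def)
  have ginj: "inj_on g ?U" using g by (auto simp: bij_betw_def)
  have gim: "g ` ?U = K" using g by (auto simp: bij_betw_def)
  have RC: "rowsel C n g \<in> carrier_mat n n" by (simp add: rowsel_def)
  have "(\<Sum>f\<in>?S. ?Q f) = (\<Sum>p\<in>?P. ?Q (?j p))"
  proof (rule sum.reindex_bij_witness[where i="?i" and j="?j", symmetric])
    fix p assume "p \<in> ?P"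
    then have p: "p permutes ?U" by simp
    have pU: "\<And>i. i < n \<Longrightarrow> p i < n" using permutes_in_image[OF p] by auto
    show "?i (?j p) = p"
    proof
      fix i show "?i (?j p) i = p i"
        using pU[of i] p inv_into_f_f[OF ginj] permutes_not_in[OF p, of i] by auto
    qed
    have "inj_on (?j p) ?U"
    proof (rule inj_onI)
      fix x y assume "x \<in> ?U" "y \<in> ?U" "?j p x = ?j p y"
      then have "g (p x) = g (p y)" by simp
      then have "p x = p y" using ginj pU \<open>x \<in> ?U\<close> \<open>y \<in> ?U\<close> by (auto simp: inj_on_def)
      then show "x = y" using permutes_inj[OF p] by (auto simp: inj_on_def)
    qed
    moreover have "?j p ` ?U = K"
    proof -
      have "?j p ` ?U = g ` (p ` ?U)" by (auto simp: image_def)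
      also have "p ` ?U = ?U" by (rule permutes_image[OF p])
      finally show ?thesis using gim by simp
    qed
    ultimately show "?j p \<in> ?S" using gK pU K by auto
  next
    fix f assume "f \<in> ?S"
    then have fm: "\<And>i. i < n \<Longrightarrow> f i \<in> K" and fo: "\<And>i. i \<ge> n \<Longrightarrow> f i = i"
      and finj: "inj_on f ?U" and fim: "f ` ?U = K" by auto
    show "?j (?i f) = f"
    proof
      fix i show "?j (?i f) i = f i"
        using fm[of i] fo[of i] f_inv_into_f[of "f i" g ?U] gim by auto
    qed
    have "bij_betw (?i f) ?U ?U"
    proof -
      have "bij_betw (inv_into ?U g \<circ> f) ?U ?U"
        by (rule bij_betw_trans[of f ?U K]) (use finj fim bij_betw_inv_into[OF g] in \<open>auto simp: bij_betw_def\<close>)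
      then show ?thesis by (rule bij_betw_cong[THEN iffD1, rotated]) auto
    qed
    then have "?i f permutes ?U" by (rule bij_imp_permutes) auto
    then show "?i f \<in> ?P" by simp
  qed simp
  also have "\<dots> = (\<Sum>p\<in>?P. det (rowsel C n g) * (signof p * (\<Prod>i\<in>?U. colsel A n g $$ (i, p i))))"
  proof (rule sum.cong[OF refl])
    fix p assume "p \<in> ?P"
    then have p: "p permutes ?U" by simp
    have pU: "\<And>i. i < n \<Longrightarrow> p i < n" using permutes_in_image[OF p] by auto
    have r: "rowsel C n (?j p) = mat n n (\<lambda>(i,j). rowsel C n g $$ (p i, j))"
      by (rule eq_matI) (auto simp: rowsel_def pU)
    have d: "det (rowsel C n (?j p)) = signof p * det (rowsel C n g)"
      unfolding r by (rule det_permute_rows[OF RC p])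
    have pr: "(\<Prod>i\<in>?U. A $$ (i, ?j p i)) = (\<Prod>i\<in>?U. colsel A n g $$ (i, p i))"
      by (rule prod.cong[OF refl]) (auto simp: colsel_def pU)
    show "?Q (?j p) = det (rowsel C n g) * (signof p * (\<Prod>i\<in>?U. colsel A n g $$ (i, p i)))"
      unfolding d pr by (simp add: ac_simps)
  qed
  also have "\<dots> = det (rowsel C n g) * det (colsel A n g)"
    unfolding sum_distrib_left[symmetric]
    by (subst det_def'[of _ n]) (auto simp: colsel_def)
  finally show ?thesis by (simp add: ac_simps)
qed

lemma cauchy_binet:
  fixes A C :: "'a::comm_ring_1 mat"
  assumes A: "A \<in> carrier_mat n m" and C: "C \<in> carrier_mat m n"
  shows "det (A * C) = (\<Sum>K\<in>{K. K \<subseteq> {0..<m} \<and> card K = n}.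
            det (colsel A n (en K)) * det (rowsel C n (en K)))"
proof -
  let ?U = "{0..<n}"
  let ?F = "{f. (\<forall>i\<in>?U. f i \<in> {0..<m}) \<and> (\<forall>i. i \<notin> ?U \<longrightarrow> f i = i)}"
  let ?I = "{f \<in> ?F. inj_on f ?U}"
  let ?Ks = "{K. K \<subseteq> {0..<m} \<and> card K = n}"
  let ?Q = "\<lambda>f. (\<Prod>i\<in>{0..<n}. A $$ (i, f i)) * det (rowsel C n f)"
  have fF: "finite ?F" by (rule finite_bounded_functions) auto
  have s1: "det (A * C) = (\<Sum>f\<in>?F. det (mat\<^sub>r n n (\<lambda>i. A $$ (i, f i) \<cdot>\<^sub>v row C (f i))))"
    unfolding mat_mul_finsum_alt[OF A C]
    by (rule det_linear_rows_sum) (use C in auto)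
  have s2: "det (mat\<^sub>r n n (\<lambda>i. A $$ (i, f i) \<cdot>\<^sub>v row C (f i))) = ?Q f" if f: "f \<in> ?F" for f
  proof -
    have "det (mat\<^sub>r n n (\<lambda>i. A $$ (i, f i) \<cdot>\<^sub>v row C (f i)))
        = prod (\<lambda>i. A $$ (i, f i)) ?U * det (mat\<^sub>r n n (\<lambda>i. row C (f i)))"
      by (rule det_rows_mul) (use C in auto)
    also have "mat\<^sub>r n n (\<lambda>i. row C (f i)) = rowsel C n f"
      by (rule eq_matI) (use C f in \<open>auto simp: rowsel_def\<close>)
    finally show ?thesis .
  qed
  have s3: "?Q f = 0" if f: "f \<in> ?F - ?I" for f
  proof -
    from f obtain i j where ij: "i \<in> ?U" "j \<in> ?U" "i \<noteq> j" "f i = f j"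
      unfolding inj_on_def by auto
    have "det (rowsel C n f) = 0"
      by (rule det_identical_rows[of _ n i j]) (use ij in \<open>auto simp: rowsel_def\<close>)
    then show ?thesis by simp
  qed
  have "det (A * C) = (\<Sum>f\<in>?F. ?Q f)" unfolding s1 by (rule sum.cong[OF refl]) (rule s2)
  also have "\<dots> = (\<Sum>f\<in>?I. ?Q f)"
    by (rule sum.mono_neutral_right[OF fF]) (use s3 in auto)
  also have "\<dots> = (\<Sum>K\<in>?Ks. \<Sum>f\<in>{f \<in> ?I. f ` ?U = K}. ?Q f)"
  proof (rule sum.group[symmetric])
    show "finite ?I" using fF by (rule finite_subset[rotated]) auto
    show "finite ?Ks" by (rule finite_subset[of _ "Pow {0..<m}"]) auto
    show "(\<lambda>f. f ` ?U) ` ?I \<subseteq> ?Ks"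
      by (auto simp: card_image)
  qed
  also have "\<dots> = (\<Sum>K\<in>?Ks. det (colsel A n (en K)) * det (rowsel C n (en K)))"
  proof (rule sum.cong[OF refl])
    fix K assume K: "K \<in> ?Ks"
    then have fK: "finite K" by (auto intro: finite_subset)
    have g: "bij_betw (en K) ?U K" using en_bij[OF fK] K by simp
    have "{f \<in> ?I. f ` ?U = K} = {f. (\<forall>i\<in>{0..<n}. f i \<in> {0..<m}) \<and> (\<forall>i. i \<notin> {0..<n} \<longrightarrow> f i = i)
              \<and> inj_on f {0..<n} \<and> f ` {0..<n} = K}" by auto
    then show "(\<Sum>f\<in>{f \<in> ?I. f ` ?U = K}. ?Q f) = det (colsel A n (en K)) * det (rowsel C n (en K))"
      using cb_perm_part[OF A C g] K by simp
  qed
  finally show ?thesis .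
qed



lemma neg1_pow: "(-1::complex)^k = 1 \<or> (-1::complex)^k = -1"
  by (cases "even k") auto

lemma col_sum_zero_det:
  fixes A :: "complex mat"
  assumes A: "A \<in> carrier_mat n n" and cs: "\<forall>j<n. (\<Sum>i<n. A $$ (i,j)) = 0" and n: "n > 0"
  shows "det A = 0"
proof -
  let ?v = "vec n (\<lambda>_. 1::complex)"
  have "transpose_mat A *\<^sub>v ?v = 0\<^sub>v n"
  proof (rule eq_vecI)
    fix j assume j: "j < dim_vec (0\<^sub>v n :: complex vec)"
    have "(transpose_mat A *\<^sub>v ?v) $ j = (\<Sum>i<n. A $$ (i,j))"
      using A j by (auto simp: scalar_prod_def lessThan_atLeast0 intro!: sum.cong)
    then show "(transpose_mat A *\<^sub>v ?v) $ j = 0\<^sub>v n $ j" using cs j by simp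
  qed (use A in auto)
  moreover have "?v \<noteq> 0\<^sub>v n"
  proof
    assume "?v = 0\<^sub>v n"
    then have "?v $ 0 = 0\<^sub>v n $ 0" by simp
    then show False using n by simp
  qed
  moreover have "?v \<in> carrier_vec n" by simp
  ultimately have ex: "\<exists>v. v \<in> carrier_vec n \<and> v \<noteq> 0\<^sub>v n \<and> transpose_mat A *\<^sub>v v = 0\<^sub>v n"
    by blast
  have AT: "transpose_mat A \<in> carrier_mat n n" using A by simp
  have "det (transpose_mat A) = 0"
    using det_0_iff_vec_prod_zero[OF AT] ex by simp
  then show ?thesis using det_transpose[OF A] by simp
qed

lemma TU:
  fixes A :: "complex mat"
  assumes "A \<in> carrier_mat n n"
  and "\<forall>i<n. \<forall>j<n. A$$(i,j) = 0 \<or> A$$(i,j) = 1 \<or> A$$(i,j) = -1"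
  and "\<forall>j<n. \<forall>i<n. \<forall>i'<n. A$$(i,j) = 1 \<longrightarrow> A$$(i',j) = 1 \<longrightarrow> i = i'"
  and "\<forall>j<n. \<forall>i<n. \<forall>i'<n. A$$(i,j) = -1 \<longrightarrow> A$$(i',j) = -1 \<longrightarrow> i = i'"
  shows "det A = 0 \<or> det A = 1 \<or> det A = -1"
  using assms
proof (induction n arbitrary: A)
  case 0
  then show ?case by simp
next
  case (Suc n)
  note A = Suc.prems(1)
  show ?case
  proof (cases "\<exists>j<Suc n. \<forall>i<Suc n. \<forall>i'<Suc n. A$$(i,j) \<noteq> 0 \<longrightarrow> A$$(i',j) \<noteq> 0 \<longrightarrow> i = i'")
    case True
    then obtain j where j: "j < Suc n"
      and uq: "\<forall>i<Suc n. \<forall>i'<Suc n. A$$(i,j) \<noteq> 0 \<longrightarrow> A$$(i',j) \<noteq> 0 \<longrightarrow> i = i'" by blast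
    have lap: "det A = (\<Sum>i<Suc n. A $$ (i,j) * cofactor A i j)"
      by (rule laplace_expansion_column[OF A j])
    show ?thesis
    proof (cases "\<exists>i<Suc n. A$$(i,j) \<noteq> 0")
      case False
      then show ?thesis unfolding lap by simp
    next
      case True
      then obtain i0 where i0: "i0 < Suc n" "A$$(i0,j) \<noteq> 0" by blast
      have "det A = (\<Sum>i\<in>{i0}. A $$ (i,j) * cofactor A i j)"
        unfolding lap
        by (rule sum.mono_neutral_right) (use i0 uq in auto)
      then have dA: "det A = A $$ (i0,j) * ((-1)^(i0+j) * det (mat_delete A i0 j))"
        by (simp add: cofactor_def)
      let ?D = "mat_delete A i0 j"
      let ?ins = "\<lambda>i a. if a < i then a else Suc a"
      have D: "?D \<in> carrier_mat n n" using mat_delete_carrier[OF A] by simp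
      have Dix: "\<And>a b. a < n \<Longrightarrow> b < n \<Longrightarrow> ?D $$ (a,b) = A $$ (?ins i0 a, ?ins j b)"
        using A by (auto simp: mat_delete_def)
      have insl: "\<And>i a. a < n \<Longrightarrow> ?ins i a < Suc n" by auto
      have insj: "\<And>i a b. ?ins i a = ?ins i b \<Longrightarrow> a = b" by (auto split: if_splits)
      have IH: "det ?D = 0 \<or> det ?D = 1 \<or> det ?D = -1"
      proof (rule Suc.IH[OF D])
        show "\<forall>i<n. \<forall>ja<n. ?D $$ (i, ja) = 0 \<or> ?D $$ (i, ja) = 1 \<or> ?D $$ (i, ja) = - 1"
        proof (intro allI impI)
          fix a b assume a: "a < n" and b: "b < n"
          show "?D $$ (a, b) = 0 \<or> ?D $$ (a, b) = 1 \<or> ?D $$ (a, b) = - 1"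
            unfolding Dix[OF a b] using Suc.prems(2)[rule_format, OF insl[OF a] insl[OF b]] .
        qed
        show "\<forall>ja<n. \<forall>i<n. \<forall>i'<n. ?D $$ (i, ja) = 1 \<longrightarrow> ?D $$ (i', ja) = 1 \<longrightarrow> i = i'"
        proof (intro allI impI)
          fix a a' b assume b: "b < n" and a: "a < n" and a': "a' < n"
            and h: "?D $$ (a, b) = 1" "?D $$ (a', b) = 1"
          then have "?ins i0 a = ?ins i0 a'"
            using Suc.prems(3)[rule_format, OF insl[OF b] insl[OF a] insl[OF a']] h unfolding Dix[OF a b] Dix[OF a' b] by simp
          then show "a = a'" by (rule insj)
        qed
        show "\<forall>ja<n. \<forall>i<n. \<forall>i'<n. ?D $$ (i, ja) = -1 \<longrightarrow> ?D $$ (i', ja) = -1 \<longrightarrow> i = i'"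
        proof (intro allI impI)
          fix a a' b assume b: "b < n" and a: "a < n" and a': "a' < n"
            and h: "?D $$ (a, b) = -1" "?D $$ (a', b) = -1"
          then have "?ins i0 a = ?ins i0 a'"
            using Suc.prems(4)[rule_format, OF insl[OF b] insl[OF a] insl[OF a']] h unfolding Dix[OF a b] Dix[OF a' b] by simp
          then show "a = a'" by (rule insj)
        qed
      qed
      have a: "A $$ (i0,j) = 1 \<or> A $$ (i0,j) = -1" using Suc.prems(2)[rule_format, OF i0(1) j] i0(2) by simp
      show ?thesis unfolding dA using a IH neg1_pow[of "i0+j"] by auto
    qed
  next
    case False
    have cs: "\<forall>j<Suc n. (\<Sum>i<Suc n. A $$ (i,j)) = 0"
    proof (intro allI impI)
      fix j assume j: "j < Suc n"
      from False j obtain i i' where ii: "i < Suc n" "i' < Suc n" "A$$(i,j) \<noteq> 0" "A$$(i',j) \<noteq> 0" "i \<noteq> i'"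
        by blast
      have vi: "A$$(i,j) = 1 \<or> A$$(i,j) = -1" "A$$(i',j) = 1 \<or> A$$(i',j) = -1"
        using Suc.prems(2)[rule_format, OF ii(1) j] Suc.prems(2)[rule_format, OF ii(2) j] ii(3,4) by simp_all
      have opp: "A$$(i,j) + A$$(i',j) = 0"
      proof -
        have "\<not> (A$$(i,j) = 1 \<and> A$$(i',j) = 1)" using Suc.prems(3)[rule_format, of j i i'] ii j by blast
        moreover have "\<not> (A$$(i,j) = -1 \<and> A$$(i',j) = -1)" using Suc.prems(4)[rule_format, of j i i'] ii j by blast
        ultimately show ?thesis using vi by auto
      qed
      have "(\<Sum>k<Suc n. A $$ (k,j)) = (\<Sum>k\<in>{i,i'}. A $$ (k,j))"
      proof (rule sum.mono_neutral_right)
        show "\<forall>k\<in>{..<Suc n} - {i, i'}. A $$ (k, j) = 0"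
        proof
          fix k assume k: "k \<in> {..<Suc n} - {i, i'}"
          show "A $$ (k, j) = 0"
          proof (rule ccontr)
            assume "A $$ (k,j) \<noteq> 0"
            then have "A$$(k,j) = 1 \<or> A$$(k,j) = -1" using Suc.prems(2)[rule_format, of k j] k j by simp
            then show False using vi Suc.prems(3)[rule_format, of j k i] Suc.prems(3)[rule_format, of j k i']
                Suc.prems(4)[rule_format, of j k i] Suc.prems(4)[rule_format, of j k i']
                Suc.prems(3)[rule_format, of j i i'] Suc.prems(4)[rule_format, of j i i'] ii j k by auto
          qed
        qed
      qed (use ii in auto)
      also have "\<dots> = 0" using opp ii by simp
      finally show "(\<Sum>k<Suc n. A $$ (k,j)) = 0" .
    qed
    have "det A = 0" by (rule col_sum_zero_det[OF A cs]) simp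
    then show ?thesis by simp
  qed
qed



definition inc :: "nat \<Rightarrow> nat set \<Rightarrow> complex" where
  "inc u e = (if u = Min e then 1 else if u = Max e then -1 else 0)"

definition vx :: "nat \<Rightarrow> (nat \<Rightarrow> complex) \<Rightarrow> nat \<Rightarrow> complex" where
  "vx n v u = (if 1 \<le> u \<and> u \<le> n then v (u - 1) else 0)"

lemma sum_ind: "(\<Sum>i<n. if Suc i = a then v i else (0::complex)) = vx n v a"
proof (cases "1 \<le> a \<and> a \<le> n")
  case True
  then have "(\<Sum>i<n. if Suc i = a then v i else 0) = (\<Sum>i<n. if i = a - 1 then v i else 0)"
    by (intro sum.cong) auto
  also have "\<dots> = v (a - 1)" using True by auto
  finally show ?thesis using True by (simp add: vx_def)
next
  case False
  then have "(\<Sum>i<n. if Suc i = a then v i else 0) = (\<Sum>i<n. (0::complex))"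
    by (intro sum.cong) auto
  then show ?thesis using False by (auto simp: vx_def)
qed

lemma inc_sum:
  assumes "Min e \<noteq> Max e"
  shows "(\<Sum>i<n. inc (Suc i) e * v i) = vx n v (Min e) - vx n v (Max e)"
proof -
  have "(\<Sum>i<n. inc (Suc i) e * v i) =
     (\<Sum>i<n. (if Suc i = Min e then v i else 0) - (if Suc i = Max e then v i else 0))"
    using assms by (intro sum.cong) (auto simp: inc_def)
  also have "\<dots> = vx n v (Min e) - vx n v (Max e)"
    by (simp add: sum_subtractf sum_ind)
  finally show ?thesis .
qed

lemma rtrancl_const:
  assumes "(a, b) \<in> (edge_rel S)\<^sup>*" and "\<forall>e\<in>S. x (Min e) = x (Max e)"
  shows "x a = x b"
  using assms(1)
proof (induction rule: rtrancl_induct)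
  case base then show ?case by simp
next
  case (step y z)
  then have "{y, z} \<in> S" by (simp add: edge_rel_def)
  then have "x (Min {y,z}) = x (Max {y,z})" using assms(2) by blast
  then have "x y = x z" by (cases "y \<le> z") (auto simp: min_def max_def)
  then show ?case using step by simp
qed

lemma edge_sym: "sym (edge_rel S)"
  by (auto simp: sym_def edge_rel_def insert_commute)

lemma transpose_zero_det:
  fixes D :: "complex mat"
  assumes D: "D \<in> carrier_mat n n" and v: "v \<in> carrier_vec n" "v \<noteq> 0\<^sub>v n"
    and z: "transpose_mat D *\<^sub>v v = 0\<^sub>v n"
  shows "det D = 0"
proof -
  have AT: "transpose_mat D \<in> carrier_mat n n" using D by simp
  have "det (transpose_mat D) = 0"
    using det_0_iff_vec_prod_zero[OF AT] v z by blast
  then show ?thesis using det_transpose[OF D] by simp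
qed

lemma incmat_tmul:
  assumes j: "j < n" and v: "v \<in> carrier_vec n" and me: "Min (ed j) \<noteq> Max (ed j)"
  shows "(transpose_mat (mat n n (\<lambda>(i,j). inc (Suc i) (ed j))) *\<^sub>v v) $ j
     = vx n (\<lambda>i. v $ i) (Min (ed j)) - vx n (\<lambda>i. v $ i) (Max (ed j))"
proof -
  have "(transpose_mat (mat n n (\<lambda>(i,j). inc (Suc i) (ed j))) *\<^sub>v v) $ j
      = (\<Sum>i<n. inc (Suc i) (ed j) * v $ i)"
    using j v by (auto simp: scalar_prod_def lessThan_atLeast0 intro!: sum.cong)
  also have "\<dots> = vx n (\<lambda>i. v $ i) (Min (ed j)) - vx n (\<lambda>i. v $ i) (Max (ed j))"
    by (rule inc_sum[OF me])
  finally show ?thesis .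
qed

lemma inc_det_nonzero:
  assumes me: "\<forall>j<n. Min (ed j) \<noteq> Max (ed j)"
    and conn: "connected_on (Suc n) S" and Sed: "S \<subseteq> ed ` {0..<n}"
  shows "det (mat n n (\<lambda>(i,j). inc (Suc i) (ed j))) \<noteq> 0"
proof
  let ?D = "mat n n (\<lambda>(i,j). inc (Suc i) (ed j))"
  assume "det ?D = 0"
  moreover have "?D \<in> carrier_mat n n" by simp
  ultimately have "det (transpose_mat ?D) = 0" using det_transpose by metis
  then obtain v where v: "v \<in> carrier_vec n" "v \<noteq> 0\<^sub>v n" "transpose_mat ?D *\<^sub>v v = 0\<^sub>v n"
    using det_0_iff_vec_prod_zero[of "transpose_mat ?D" n] by auto
  let ?x = "vx n (\<lambda>i. v $ i)"
  have ej: "?x (Min (ed j)) = ?x (Max (ed j))" if j: "j < n" for j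
  proof -
    have "(transpose_mat ?D *\<^sub>v v) $ j = 0" using v(3) j by simp
    then show ?thesis using incmat_tmul[where ed=ed, OF j v(1) me[rule_format, OF j]] by simp
  qed
  have eS: "\<forall>e\<in>S. ?x (Min e) = ?x (Max e)" using Sed ej by auto
  have "v = 0\<^sub>v n"
  proof (rule eq_vecI)
    fix i assume i: "i < dim_vec (0\<^sub>v n :: complex vec)"
    then have i': "i < n" by simp
    have "(Suc i, Suc n) \<in> (edge_rel S)\<^sup>*" using conn i' unfolding connected_on_def by auto
    then have "?x (Suc i) = ?x (Suc n)" using rtrancl_const eS by blast
    then show "v $ i = 0\<^sub>v n $ i" using i' by (simp add: vx_def)
  qed (use v in auto)
  then show False using v by simp
qed

lemma inc_det_zero:
  assumes me: "\<forall>j<n. Min (ed j) \<noteq> Max (ed j) \<and> Min (ed j) \<in> {1..Suc n} \<and> Max (ed j) \<in> {1..Suc n}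
                 \<and> ed j = {Min (ed j), Max (ed j)} \<and> ed j \<in> S"
    and nconn: "\<not> connected_on (Suc n) S"
  shows "det (mat n n (\<lambda>(i,j). inc (Suc i) (ed j))) = 0"
proof -
  let ?D = "mat n n (\<lambda>(i,j). inc (Suc i) (ed j))"
  let ?R = "{u. (Suc n, u) \<in> (edge_rel S)\<^sup>*}"
  have "\<exists>u\<in>{1..Suc n}. u \<notin> ?R"
  proof (rule ccontr)
    assume "\<not> ?thesis"
    then have all: "\<forall>u\<in>{1..Suc n}. (Suc n, u) \<in> (edge_rel S)\<^sup>*" by auto
    have "connected_on (Suc n) S" unfolding connected_on_def
    proof (intro ballI)
      fix i j assume i: "i \<in> {1..Suc n}" and j: "j \<in> {1..Suc n}"
      have "(i, Suc n) \<in> (edge_rel S)\<^sup>*"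
        using all i sym_rtrancl[OF edge_sym] by (meson symD)
      then show "(i, j) \<in> (edge_rel S)\<^sup>*" using all j by (meson rtrancl_trans)
    qed
    then show False using nconn by simp
  qed
  then obtain u where u: "u \<in> {1..Suc n}" "u \<notin> ?R" by blast
  have uN: "u \<noteq> Suc n" using u by auto
  let ?v = "vec n (\<lambda>i. if Suc i \<in> ?R then 0 else (1::complex))"
  have vc: "?v \<in> carrier_vec n" by simp
  have vnz: "?v \<noteq> 0\<^sub>v n"
  proof
    assume "?v = 0\<^sub>v n"
    then have "?v $ (u - 1) = 0\<^sub>v n $ (u - 1)" by simp
    then show False using u uN by auto
  qed
  have "transpose_mat ?D *\<^sub>v ?v = 0\<^sub>v n"
  proof (rule eq_vecI)
    fix j assume "j < dim_vec (0\<^sub>v n :: complex vec)"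
    then have j: "j < n" by simp
    let ?x = "vx n (\<lambda>i. ?v $ i)"
    have xe: "?x w = (if w \<in> ?R then 0 else 1)" if w: "w \<in> {1..Suc n}" for w
    proof (cases "w = Suc n")
      case True then show ?thesis by (simp add: vx_def)
    next
      case False
      then have "w - 1 < n" "Suc (w - 1) = w" using w by auto
      then show ?thesis using w False by (simp add: vx_def)
    qed
    obtain a b where ab: "a = Min (ed j)" "b = Max (ed j)" by blast
    have abS: "{a, b} \<in> S" using me j ab by metis
    have "a \<in> ?R \<longleftrightarrow> b \<in> ?R"
    proof
      assume "a \<in> ?R"
      moreover have "(a, b) \<in> edge_rel S" using abS by (simp add: edge_rel_def)
      ultimately show "b \<in> ?R" by (auto intro: rtrancl_into_rtrancl)
    next
      assume "b \<in> ?R"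
      moreover have "(b, a) \<in> edge_rel S" using abS by (simp add: edge_rel_def insert_commute)
      ultimately show "a \<in> ?R" by (auto intro: rtrancl_into_rtrancl)
    qed
    then have "?x (Min (ed j)) = ?x (Max (ed j))"
      using xe me j ab by auto
    then show "(transpose_mat ?D *\<^sub>v ?v) $ j = 0\<^sub>v n $ j"
      using incmat_tmul[where ed=ed, OF j vc] me j by simp
  qed (simp)
  moreover have "?D \<in> carrier_mat n n" by simp
  ultimately show ?thesis using transpose_zero_det vc vnz by blast
qed



lemma det_pos_nonzero:
  assumes me: "\<forall>k<length es. Min (es!k) \<noteq> Max (es!k)"
  and conn: "connected_on (Suc n) (set es)"
  and pos: "\<forall>k<length es. Re (w k) > 0"
  shows "det (mat n (length es) (\<lambda>(i,k). inc (Suc i) (es!k) * w k) * mat (length es) n (\<lambda>(k,j). inc (Suc j) (es!k))) \<noteq> 0"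
proof
  let ?m = "length es"
  let ?A = "mat n ?m (\<lambda>(i,k). inc (Suc i) (es!k) * w k)"
  let ?C = "mat ?m n (\<lambda>(k,j). inc (Suc j) (es!k))"
  assume "det (?A * ?C) = 0"
  moreover have AC: "?A * ?C \<in> carrier_mat n n" by (simp add: carrier_matI)
  ultimately obtain v where v: "v \<in> carrier_vec n" "v \<noteq> 0\<^sub>v n" "(?A * ?C) *\<^sub>v v = 0\<^sub>v n"
    using det_0_iff_vec_prod_zero[OF AC] by blast
  define y where "y = (\<lambda>k. (?C *\<^sub>v v) $ k)"
  have Ay: "?A *\<^sub>v (?C *\<^sub>v v) = 0\<^sub>v n" using v assoc_mult_mat_vec[of ?A n ?m ?C n v] by simp
  have yk: "y k = (\<Sum>j<n. inc (Suc j) (es!k) * v $ j)" if k: "k < ?m" for k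
    using k v by (auto simp: y_def scalar_prod_def lessThan_atLeast0 intro!: sum.cong)
  have Ayi: "(\<Sum>k<?m. inc (Suc i) (es!k) * w k * y k) = 0" if i: "i < n" for i
  proof -
    have "(?A *\<^sub>v (?C *\<^sub>v v)) $ i = (\<Sum>k<?m. inc (Suc i) (es!k) * w k * y k)"
      using i by (auto simp: y_def scalar_prod_def lessThan_atLeast0 intro!: sum.cong)
    then show ?thesis using Ay i by simp
  qed
  have cinc: "cnj (inc u e) = inc u e" for u e by (simp add: inc_def)
  have cy: "cnj (y k) = (\<Sum>j<n. inc (Suc j) (es!k) * cnj (v $ j))" if k: "k < ?m" for k
    unfolding yk[OF k] cnj_sum by (simp add: cinc)
  have "0 = (\<Sum>i<n. cnj (v $ i) * (\<Sum>k<?m. inc (Suc i) (es!k) * w k * y k))"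
    using Ayi by simp
  also have "\<dots> = (\<Sum>i<n. \<Sum>k<?m. w k * y k * (inc (Suc i) (es!k) * cnj (v $ i)))"
    by (simp add: sum_distrib_left mult_ac)
  also have "\<dots> = (\<Sum>k<?m. \<Sum>i<n. w k * y k * (inc (Suc i) (es!k) * cnj (v $ i)))"
    by (rule sum.swap)
  also have "\<dots> = (\<Sum>k<?m. w k * (y k * cnj (y k)))"
    by (rule sum.cong[OF refl]) (simp add: cy sum_distrib_left mult_ac)
  finally have "(\<Sum>k<?m. w k * (y k * cnj (y k))) = 0" by simp
  then have "Re (\<Sum>k<?m. w k * (y k * cnj (y k))) = 0" by simp
  then have s0: "(\<Sum>k<?m. Re (w k) * ((Re (y k))\<^sup>2 + (Im (y k))\<^sup>2)) = 0"
    unfolding Re_sum complex_mult_cnj by simp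
  have nn: "\<forall>k\<in>{..<?m}. 0 \<le> Re (w k) * ((Re (y k))\<^sup>2 + (Im (y k))\<^sup>2)"
  proof
    fix k assume "k \<in> {..<?m}"
    then have "0 < Re (w k)" using pos by simp
    then show "0 \<le> Re (w k) * ((Re (y k))\<^sup>2 + (Im (y k))\<^sup>2)" by (intro mult_nonneg_nonneg) simp_all
  qed
  have y0: "y k = 0" if k: "k < ?m" for k
  proof -
    have "Re (w k) * ((Re (y k))\<^sup>2 + (Im (y k))\<^sup>2) = 0"
      using sum_nonneg_eq_0_iff[of "{..<?m}" "\<lambda>k. Re (w k) * ((Re (y k))\<^sup>2 + (Im (y k))\<^sup>2)"] nn s0 k by simp
    then have "Re (y k) = 0 \<and> Im (y k) = 0" using pos[rule_format, OF k] by auto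
    then show ?thesis by (simp add: complex_eq_iff)
  qed
  let ?x = "vx n (\<lambda>i. v $ i)"
  have eS: "\<forall>e\<in>set es. ?x (Min e) = ?x (Max e)"
  proof
    fix e assume "e \<in> set es"
    then obtain k where k: "k < ?m" "e = es!k" by (auto simp: in_set_conv_nth)
    have "y k = ?x (Min e) - ?x (Max e)"
      unfolding yk[OF k(1)] k(2) by (rule inc_sum) (use me k in auto)
    then show "?x (Min e) = ?x (Max e)" using y0[OF k(1)] by simp
  qed
  have "v = 0\<^sub>v n"
  proof (rule eq_vecI)
    fix i assume i: "i < dim_vec (0\<^sub>v n :: complex vec)"
    then have i': "i < n" by simp
    have "(Suc i, Suc n) \<in> (edge_rel (set es))\<^sup>*" using conn i' unfolding connected_on_def by auto
    then have "?x (Suc i) = ?x (Suc n)" using rtrancl_const eS by blast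
    then show "v $ i = 0\<^sub>v n $ i" using i' by (simp add: vx_def)
  qed (use v in auto)
  then show False using v by simp
qed

lemma det_col_scale:
  fixes a :: "nat \<Rightarrow> nat \<Rightarrow> 'a::comm_ring_1"
  shows "det (mat n n (\<lambda>(i,j). a i j * c j)) = (\<Prod>j\<in>{0..<n}. c j) * det (mat n n (\<lambda>(i,j). a i j))"
proof -
  have "det (mat n n (\<lambda>(i,j). a i j * c j))
     = (\<Sum>p\<in>{p. p permutes {0..<n}}. signof p * (\<Prod>i\<in>{0..<n}. mat n n (\<lambda>(i,j). a i j * c j) $$ (i, p i)))"
    by (rule det_def') simp
  also have "\<dots> = (\<Sum>p\<in>{p. p permutes {0..<n}}. (\<Prod>j\<in>{0..<n}. c j) * (signof p * (\<Prod>i\<in>{0..<n}. mat n n (\<lambda>(i,j). a i j) $$ (i, p i))))"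
  proof (rule sum.cong[OF refl])
    fix p assume "p \<in> {p. p permutes {0..<n}}"
    then have p: "p permutes {0..<n}" by simp
    have pU: "\<And>i. i < n \<Longrightarrow> p i < n" using permutes_in_image[OF p] by auto
    have "(\<Prod>i\<in>{0..<n}. mat n n (\<lambda>(i,j). a i j * c j) $$ (i, p i))
        = (\<Prod>i\<in>{0..<n}. a i (p i) * c (p i))"
      by (rule prod.cong[OF refl]) (simp add: pU)
    also have "\<dots> = (\<Prod>i\<in>{0..<n}. a i (p i)) * (\<Prod>i\<in>{0..<n}. c (p i))"
      by (rule prod.distrib)
    also have "(\<Prod>i\<in>{0..<n}. c (p i)) = (\<Prod>j\<in>{0..<n}. c j)"
      using prod.permute[OF p, of c] by (simp add: o_def)
    also have "(\<Prod>i\<in>{0..<n}. a i (p i)) = (\<Prod>i\<in>{0..<n}. mat n n (\<lambda>(i,j). a i j) $$ (i, p i))"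
      by (rule prod.cong[OF refl]) (simp add: pU)
    finally show "signof p * (\<Prod>i\<in>{0..<n}. mat n n (\<lambda>(i,j). a i j * c j) $$ (i, p i))
       = (\<Prod>j\<in>{0..<n}. c j) * (signof p * (\<Prod>i\<in>{0..<n}. mat n n (\<lambda>(i,j). a i j) $$ (i, p i)))"
      by (simp add: ac_simps)
  qed
  also have "\<dots> = (\<Prod>j\<in>{0..<n}. c j) * det (mat n n (\<lambda>(i,j). a i j))"
    by (subst det_def'[of _ n]) (simp_all add: sum_distrib_left)
  finally show ?thesis .
qed

lemma mtt:
  assumes dist: "distinct es"
  and ed: "\<forall>e\<in>set es. Min e \<noteq> Max e \<and> Min e \<in> {1..Suc n} \<and> Max e \<in> {1..Suc n} \<and> e = {Min e, Max e}"
  shows "det (mat n (length es) (\<lambda>(i,k). inc (Suc i) (es!k) * wt (es!k)) * mat (length es) n (\<lambda>(k,j). inc (Suc j) (es!k)))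
     = (\<Sum>T\<in>spanning_trees (Suc n) (set es). \<Prod>e\<in>T. wt e)"
proof -
  let ?m = "length es"
  let ?A = "mat n ?m (\<lambda>(i,k). inc (Suc i) (es!k) * wt (es!k))"
  let ?C = "mat ?m n (\<lambda>(k,j). inc (Suc j) (es!k))"
  let ?Ks = "{K. K \<subseteq> {0..<?m} \<and> card K = n}"
  let ?P = "\<lambda>K. \<Prod>k\<in>K. wt (es!k)"
  let ?cn = "\<lambda>K. connected_on (Suc n) ((!) es ` K)"
  have CB: "det (?A * ?C) = (\<Sum>K\<in>?Ks. det (colsel ?A n (en K)) * det (rowsel ?C n (en K)))"
    by (rule cauchy_binet) auto
  have trm: "det (colsel ?A n (en K)) * det (rowsel ?C n (en K)) = (if ?cn K then ?P K else 0)"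
    if K: "K \<in> ?Ks" for K
  proof -
    let ?g = "en K"
    have fK: "finite K" using K by (auto intro: finite_subset)
    have g: "bij_betw ?g {0..<n} K" using en_bij[OF fK] K by simp
    have gm: "\<And>j. j < n \<Longrightarrow> ?g j < ?m"
    proof -
      fix j assume "j < n"
      then have "?g j \<in> K" using g by (auto simp: bij_betw_def)
      then show "?g j < ?m" using K by auto
    qed
    let ?ed = "\<lambda>j. es ! (?g j)"
    let ?D = "mat n n (\<lambda>(i,j). inc (Suc i) (?ed j))"
    have edE: "\<And>j. j < n \<Longrightarrow> ?ed j \<in> set es" using gm by simp
    have c1: "colsel ?A n ?g = mat n n (\<lambda>(i,j). inc (Suc i) (?ed j) * wt (?ed j))"
      by (rule eq_matI) (auto simp: colsel_def gm)
    have c2: "rowsel ?C n ?g = transpose_mat ?D"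
      by (rule eq_matI) (auto simp: rowsel_def gm)
    have d1: "det (colsel ?A n ?g) = ?P K * det ?D"
    proof -
      have "det (colsel ?A n ?g) = (\<Prod>j\<in>{0..<n}. wt (?ed j)) * det ?D"
        unfolding c1 by (rule det_col_scale[where a="\<lambda>i j. inc (Suc i) (?ed j)" and c="\<lambda>j. wt (?ed j)"])
      also have "(\<Prod>j\<in>{0..<n}. wt (?ed j)) = ?P K"
        by (rule prod.reindex_bij_betw[OF g])
      finally show ?thesis .
    qed
    have d2: "det (rowsel ?C n ?g) = det ?D" unfolding c2 by (rule det_transpose[of _ n]) simp
    have tu: "det ?D = 0 \<or> det ?D = 1 \<or> det ?D = -1"
      by (rule TU) (auto simp: inc_def split: if_splits)
    have img: "(!) es ` K = ?ed ` {0..<n}"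
      using g by (auto simp: bij_betw_def image_image[symmetric])
    show ?thesis
    proof (cases "?cn K")
      case True
      have "det ?D \<noteq> 0"
      proof (rule inc_det_nonzero)
        show "\<forall>j<n. Min (?ed j) \<noteq> Max (?ed j)" using ed edE by blast
        show "connected_on (Suc n) (?ed ` {0..<n})" using True img by simp
      qed simp
      then have "det ?D * det ?D = 1" using tu by auto
      then show ?thesis using True unfolding d1 d2 by (simp add: mult_ac)
    next
      case False
      have "det ?D = 0"
      proof (rule inc_det_zero)
        show "\<forall>j<n. Min (?ed j) \<noteq> Max (?ed j) \<and> Min (?ed j) \<in> {1..Suc n} \<and> Max (?ed j) \<in> {1..Suc n}
                 \<and> ?ed j = {Min (?ed j), Max (?ed j)} \<and> ?ed j \<in> ?ed ` {0..<n}"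
          using ed edE by auto
        show "\<not> connected_on (Suc n) (?ed ` {0..<n})" using False img by simp
      qed
      then show ?thesis using False unfolding d1 d2 by simp
    qed
  qed
  have fKs: "finite ?Ks" by (rule finite_subset[of _ "Pow {0..<?m}"]) auto
  have "det (?A * ?C) = (\<Sum>K\<in>?Ks. if ?cn K then ?P K else 0)"
    unfolding CB by (rule sum.cong[OF refl]) (rule trm)
  also have "\<dots> = (\<Sum>K\<in>{K \<in> ?Ks. ?cn K}. ?P K)"
    by (rule sum.inter_filter[symmetric, OF fKs])
  also have "\<dots> = (\<Sum>T\<in>spanning_trees (Suc n) (set es). \<Prod>e\<in>T. wt e)"
  proof (rule sum.reindex_bij_witness[where i="\<lambda>T. {k\<in>{0..<?m}. es!k \<in> T}" and j="\<lambda>K. (!) es ` K"])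
    fix K assume K: "K \<in> {K \<in> ?Ks. ?cn K}"
    then have Km: "K \<subseteq> {0..<?m}" by simp
    have inj: "inj_on ((!) es) K" by (rule inj_on_nth[OF dist]) (use Km in auto)
    show "{k \<in> {0..<?m}. es ! k \<in> (!) es ` K} = K"
      using Km dist by (auto simp: nth_eq_iff_index_eq)
    show "(!) es ` K \<in> spanning_trees (Suc n) (set es)"
      using K Km card_image[OF inj] by (auto simp: spanning_trees_def)
    show "(\<Prod>e\<in>(!) es ` K. wt e) = ?P K"
      by (rule prod.reindex[OF inj, unfolded o_def])
  next
    fix T assume T: "T \<in> spanning_trees (Suc n) (set es)"
    then have Ts: "T \<subseteq> set es" by (simp add: spanning_trees_def)
    have eq: "(!) es ` {k \<in> {0..<?m}. es ! k \<in> T} = T"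
    proof
      show "T \<subseteq> (!) es ` {k \<in> {0..<?m}. es ! k \<in> T}"
      proof
        fix x assume x: "x \<in> T"
        then have "x \<in> set es" using Ts by auto
        then obtain k where "k < ?m" "x = es ! k" by (metis in_set_conv_nth)
        then show "x \<in> (!) es ` {k \<in> {0..<?m}. es ! k \<in> T}" using x by auto
      qed
    qed auto
    show "(!) es ` {k \<in> {0..<?m}. es ! k \<in> T} = T" by (rule eq)
    have inj: "inj_on ((!) es) {k \<in> {0..<?m}. es ! k \<in> T}" by (rule inj_on_nth[OF dist]) auto
    show "{k \<in> {0..<?m}. es ! k \<in> T} \<in> {K \<in> ?Ks. ?cn K}"
      using T card_image[OF inj] eq by (auto simp: spanning_trees_def)
  qed
  finally show ?thesis .
qed



interpretation ofr: map_poly_comm_ring_hom "of_real :: real \<Rightarrow> complex" ..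

lemma key:
  assumes edges: "\<forall>e\<in>E. \<exists>i j. e = {i,j} \<and> i\<noteq>j \<and> i\<in>{1..N} \<and> j\<in>{1..N}"
  and conn: "connected_on N E" and N: "N \<ge> 1"
  and pos: "\<forall>e\<in>E. Re (wt e) > 0"
  shows "(\<Sum>T\<in>spanning_trees N E. \<Prod>e\<in>T. wt e) \<noteq> (0::complex)"
proof -
  obtain n where Nn: "N = Suc n" using N by (cases N) auto
  have "E \<subseteq> Pow {1..N}" using edges by auto
  then have fE: "finite E" by (rule finite_subset) simp
  obtain es where es: "set es = E" "distinct es" using finite_distinct_list[OF fE] by blast
  have ed: "\<forall>e\<in>set es. Min e \<noteq> Max e \<and> Min e \<in> {1..Suc n} \<and> Max e \<in> {1..Suc n} \<and> e = {Min e, Max e}"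
  proof
    fix e assume "e \<in> set es"
    then obtain i j where ij: "e = {i,j}" "i \<noteq> j" "i \<in> {1..N}" "j \<in> {1..N}" using edges es by blast
    show "Min e \<noteq> Max e \<and> Min e \<in> {1..Suc n} \<and> Max e \<in> {1..Suc n} \<and> e = {Min e, Max e}"
      using ij Nn by (cases "i \<le> j") (auto simp: min_def max_def)
  qed
  have me: "\<forall>k<length es. Min (es!k) \<noteq> Max (es!k)" using ed by auto
  have posk: "\<forall>k<length es. Re (wt (es!k)) > 0" using pos es by auto
  have "det (mat n (length es) (\<lambda>(i,k). inc (Suc i) (es!k) * wt (es!k)) * mat (length es) n (\<lambda>(k,j). inc (Suc j) (es!k))) \<noteq> 0"
    by (rule det_pos_nonzero[OF me _ posk]) (use conn Nn es in simp)
  then show ?thesis using mtt[OF es(2) ed, of wt] Nn es by simp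
qed

lemma poly_c1: "poly (map_poly complex_of_real [:0, a:]) z = of_real a * z"
  by (cases "a=0") (simp_all add: map_poly_pCons)
lemma poly_c2: "poly (map_poly complex_of_real [:a:]) z = of_real a"
  by (cases "a=0") (simp_all add: map_poly_pCons)

lemma rot_pos:
  assumes "\<not> (z \<in> \<real> \<and> Re z \<ge> 0)"
  shows "cmod z - Re z > 0" and "z \<noteq> 0"
proof -
  show "z \<noteq> 0" using assms by auto
  show "cmod z - Re z > 0"
  proof (cases "Im z = 0")
    case True
    then have "z \<in> \<real>" by (simp add: complex_is_Real_iff)
    with assms have "Re z < 0" by auto
    then show ?thesis by (smt (verit) norm_ge_zero)
  next
    case False
    have "(Re z)\<^sup>2 < (Re z)\<^sup>2 + (Im z)\<^sup>2" using False by simp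
    also have "\<dots> = (cmod z)\<^sup>2" by (simp add: cmod_def)
    finally have "\<bar>Re z\<bar>^2 < (cmod z)^2" by simp
    then have "\<bar>Re z\<bar> < cmod z" by (rule power_less_imp_less_base) simp
    then show ?thesis by linarith
  qed
qed

theorem mainTheorem4:
  fixes N :: nat and E :: "nat set set" and \<gamma> :: "nat set \<Rightarrow> real"
  assumes "signed_graph N E \<gamma>"
    and "connected_on N E"
  shows "\<forall>z::complex. poly (map_poly complex_of_real (M_Gamma_poly N E \<gamma>)) z = 0
           \<longrightarrow> z \<in> \<real> \<and> Re z \<ge> 0"
proof (intro allI impI)
  fix z :: complex
  assume root: "poly (map_poly complex_of_real (M_Gamma_poly N E \<gamma>)) z = 0"
  define wz where "wz e = (if \<gamma> e > 0 then complex_of_real (\<gamma> e) else complex_of_real (\<gamma> e) * z)" for e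
  have eval: "poly (map_poly complex_of_real (M_Gamma_poly N E \<gamma>)) z
      = (\<Sum>T\<in>spanning_trees N E. \<Prod>e\<in>T. wz e)"
    unfolding M_Gamma_poly_def M_def ofr.hom_sum poly_hom.hom_sum ofr.hom_prod poly_hom.hom_prod
    by (rule sum.cong[OF refl], rule prod.cong[OF refl])
       (simp add: Gamma_t_weight_def wz_def poly_c1 poly_c2)
  have edges: "\<forall>e\<in>E. \<exists>i j. e = {i,j} \<and> i\<noteq>j \<and> i\<in>{1..N} \<and> j\<in>{1..N}"
    and nz: "\<forall>e\<in>E. \<gamma> e \<noteq> 0" using assms(1) unfolding signed_graph_def by auto
  show "z \<in> \<real> \<and> Re z \<ge> 0"
  proof (rule ccontr)
    assume nc: "\<not> (z \<in> \<real> \<and> Re z \<ge> 0)"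
    have N: "N \<ge> 1"
    proof (rule ccontr)
      assume "\<not> N \<ge> 1"
      then have "N = 0" by simp
      then have "E = {}" using edges by fastforce
      then have "spanning_trees N E = {{}}" using \<open>N = 0\<close>
        unfolding spanning_trees_def connected_on_def by auto
      then show False using root eval by simp
    qed
    define c where "c = complex_of_real (cmod z) - cnj z"
    have rc: "Re c > 0" using rot_pos(1)[OF nc] by (simp add: c_def)
    have rcz: "Re (c * z) < 0"
    proof -
      have "Re (c * z) = cmod z * Re z - (cmod z)\<^sup>2"
        by (simp add: c_def cmod_def power2_eq_square algebra_simps)
      also have "\<dots> = cmod z * (Re z - cmod z)" by (simp add: power2_eq_square algebra_simps)
      also have "\<dots> < 0" using rot_pos[OF nc]
        by (simp add: mult_pos_neg)
      finally show ?thesis .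
    qed
    have pos: "\<forall>e\<in>E. Re (c * wz e) > 0"
    proof
      fix e assume "e \<in> E"
      show "Re (c * wz e) > 0"
      proof (cases "\<gamma> e > 0")
        case True then show ?thesis using rc by (simp add: wz_def)
      next
        case False
        then have "\<gamma> e < 0" using nz \<open>e \<in> E\<close> by force
        have "Re (c * wz e) = \<gamma> e * Re (c * z)" using False
          by (simp add: wz_def algebra_simps)
        then show ?thesis using \<open>\<gamma> e < 0\<close> rcz by (simp add: mult_neg_neg)
      qed
    qed
    have "(\<Sum>T\<in>spanning_trees N E. \<Prod>e\<in>T. c * wz e) = c ^ (N - 1) * (\<Sum>T\<in>spanning_trees N E. \<Prod>e\<in>T. wz e)"
      unfolding sum_distrib_left
      by (rule sum.cong[OF refl]) (simp add: prod.distrib spanning_trees_def)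
    also have "\<dots> = 0" using root eval by simp
    finally show False using key[OF edges assms(2) N pos] by simp
  qed
qed

end
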